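(* Let $\mathbb{K}$ be a field, $k\geq 1$, and let $\mathcal{C}\subseteq\mathbb{K}^{2k}$ be a self-dual linear code (so $\dim\mathcal{C}=k$). Then $$\dim_{\mathbb{K}}\big(\mathcal{C}^{(2)}\big)=2k-\mathrm{nb}(\mathcal{C}).$$
   Context: A linear code of length $n$ over $\mathbb{K}$ is a $\mathbb{K}$-subspace $\mathcal{C}\subseteq\mathbb{K}^n$; it is self-dual if $\mathcal{C}=\mathcal{C}^\perp$, where $\mathcal{C}^\perp=\{x\in\mathbb{K}^n:\sum_i x_ic_i=0\ \forall c\in\mathcal{C}\}$. The Schur (componentwise) product of $v,w\in\mathbb{K}^n$ is $v\ast w=(v_1w_1,\dots,v_nw_n)$, and the Schur square $\mathcal{C}^{(2)}$ is the $\mathbb{K}$-span of all $c\ast c'$ with $c,c'\in\mathcal{C}$. Two codes are equivalent if one is obtained from the other by a permutation of coordinates. For codes $\mathcal{C}_1\subseteq\mathbb{K}^{n_1}$, $\mathcal{C}_2\subseteq\mathbb{K}^{n_2}$, the direct sum is $\mathcal{C}_1\oplus\mathcal{C}_2=\{(c_1,c_2):c_i\in\mathcal{C}_i\}\subseteq\mathbb{K}^{n_1+n_2}$. A code is decomposable if it is equivalent to the direct sum of two nontrivial (nonzero, positive-length) codes, and indecomposable otherwise. Every code is equivalent to a direct sum of indecomposable codes (blocks), and the number of blocks is an invariant of the code, denoted $\mathrm{nb}(\mathcal{C})$. *)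

theory Defs
  imports Main "HOL.Vector_Spaces" "HOL-Library.Function_Algebras"
begin

text \<open>Vectors of K^n are represented as functions nat => K vanishing outside {..<n};
  a code on a finite coordinate set S is a set of functions vanishing outside S.\<close>

definition fscale :: "'a::field \<Rightarrow> (nat \<Rightarrow> 'a) \<Rightarrow> (nat \<Rightarrow> 'a)" where
  "fscale c x = (\<lambda>i. c * x i)"

interpretation fvec: vector_space "fscale :: 'a::field \<Rightarrow> (nat \<Rightarrow> 'a) \<Rightarrow> (nat \<Rightarrow> 'a)"
  by unfold_locales (auto simp: fscale_def algebra_simps fun_eq_iff)

definition vecs :: "nat \<Rightarrow> (nat \<Rightarrow> 'a::zero) set" where
  "vecs n = {x. \<forall>i\<ge>n. x i = 0}"

definition lin_code :: "nat \<Rightarrow> (nat \<Rightarrow> 'a::field) set \<Rightarrow> bool" where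
  "lin_code n C \<longleftrightarrow> C \<subseteq> vecs n \<and> fvec.subspace C"

definition dual_code :: "nat \<Rightarrow> (nat \<Rightarrow> 'a::field) set \<Rightarrow> (nat \<Rightarrow> 'a) set" where
  "dual_code n C = {x \<in> vecs n. \<forall>c\<in>C. (\<Sum>i<n. x i * c i) = 0}"

definition self_dual :: "nat \<Rightarrow> (nat \<Rightarrow> 'a::field) set \<Rightarrow> bool" where
  "self_dual n C \<longleftrightarrow> lin_code n C \<and> C = dual_code n C"

definition schur :: "(nat \<Rightarrow> 'a::field) \<Rightarrow> (nat \<Rightarrow> 'a) \<Rightarrow> (nat \<Rightarrow> 'a)" where
  "schur v w = (\<lambda>i. v i * w i)"

definition schur_square :: "(nat \<Rightarrow> 'a::field) set \<Rightarrow> (nat \<Rightarrow> 'a) set" where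
  "schur_square C = fvec.span {schur c c' | c c'. c \<in> C \<and> c' \<in> C}"

definition proj :: "nat set \<Rightarrow> (nat \<Rightarrow> 'a::zero) \<Rightarrow> (nat \<Rightarrow> 'a)" where
  "proj B x = (\<lambda>i. if i \<in> B then x i else 0)"

text \<open>A code C on the coordinate set S is decomposable if, after a permutation of
  coordinates, it is the direct sum of two nonzero codes; i.e. S splits into I and S - I
  such that C is the direct sum of its projections to I and to S - I, both nonzero.\<close>
definition decomposable :: "nat set \<Rightarrow> (nat \<Rightarrow> 'a::field) set \<Rightarrow> bool" where
  "decomposable S C \<longleftrightarrow> (\<exists>I. I \<subseteq> S \<and> proj I ` C \<noteq> {0} \<and> proj (S - I) ` C \<noteq> {0} \<and>
      C = {proj I x + proj (S - I) y | x y. x \<in> C \<and> y \<in> C})"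

definition indecomposable :: "nat set \<Rightarrow> (nat \<Rightarrow> 'a::field) set \<Rightarrow> bool" where
  "indecomposable S C \<longleftrightarrow> S \<noteq> {} \<and> \<not> decomposable S C"

definition block_decomp :: "nat set \<Rightarrow> (nat \<Rightarrow> 'a::field) set \<Rightarrow> nat set set \<Rightarrow> bool" where
  "block_decomp S C P \<longleftrightarrow> finite P \<and> (\<forall>B\<in>P. B \<noteq> {}) \<and> \<Union>P = S \<and>
     (\<forall>B\<in>P. \<forall>B'\<in>P. B \<noteq> B' \<longrightarrow> B \<inter> B' = {}) \<and>
     C = {(\<Sum>B\<in>P. proj B (x B)) | x. \<forall>B\<in>P. x B \<in> C} \<and>
     (\<forall>B\<in>P. indecomposable B (proj B ` C))"

text \<open>Number of blocks nb(C) of a code of length n (an invariant of C).\<close>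
definition nb :: "nat \<Rightarrow> (nat \<Rightarrow> 'a::field) set \<Rightarrow> nat" where
  "nb n C = (THE m. \<exists>P. block_decomp {..<n} C P \<and> card P = m)"

end

theory Submission
  imports Defs
begin

lemma sum_fun_apply: "(\<Sum>i\<in>T. f i) j = (\<Sum>i\<in>T. f i j)"
  by (induction T rule: infinite_finite_induct) auto

definition unitv :: "nat \<Rightarrow> nat \<Rightarrow> 'a::field" where
  "unitv i = (\<lambda>j. if j = i then 1 else 0)"

definition ind :: "nat set \<Rightarrow> nat \<Rightarrow> 'a::field" where
  "ind B = proj B (\<lambda>_. 1)"

definition orth :: "nat \<Rightarrow> (nat \<Rightarrow> 'a::field) \<Rightarrow> (nat \<Rightarrow> 'a) \<Rightarrow> 'a" where
  "orth n x y = (\<Sum>i<n. x i * y i)"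

lemma expand_vec:
  assumes "finite T" "\<And>i. i \<notin> T \<Longrightarrow> x i = 0"
  shows "x = (\<Sum>i\<in>T. fscale (x i) (unitv i :: nat \<Rightarrow> 'a::field))"
proof (rule ext)
  fix j
  have "(\<Sum>i\<in>T. fscale (x i) (unitv i :: nat \<Rightarrow> 'a)) j = (\<Sum>i\<in>T. x i * (if j = i then 1 else 0))"
    by (simp add: sum_fun_apply fscale_def unitv_def)
  also have "\<dots> = (\<Sum>i\<in>T. if i = j then x i else 0)"
    by (rule sum.cong) auto
  also have "\<dots> = (if j \<in> T then x j else 0)"
    using assms(1) by (simp add: sum.delta)
  also have "\<dots> = x j" using assms(2) by auto
  finally show "x j = (\<Sum>i\<in>T. fscale (x i) (unitv i :: nat \<Rightarrow> 'a)) j" by simp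
qed

lemma subspace_vecs: "fvec.subspace (vecs n :: (nat \<Rightarrow> 'a::field) set)"
  unfolding fvec.subspace_def vecs_def by (auto simp: fscale_def)

lemma subspace_orth: "fvec.subspace {w. orth n x w = (0::'a::field)}"
proof -
  have "(\<Sum>i<n. x i * (c * y i)) = c * (\<Sum>i<n. x i * y i)" for c y
    by (simp add: sum_distrib_left algebra_simps)
  then show ?thesis unfolding fvec.subspace_def orth_def
    by (auto simp: fscale_def distrib_left sum.distrib)
qed

lemma unitv_in_vecs: "i < n \<Longrightarrow> unitv i \<in> vecs n"
  by (auto simp: unitv_def vecs_def)

lemma vecs_span: "vecs n \<subseteq> fvec.span (unitv ` {..<n} :: (nat \<Rightarrow> 'a::field) set)"
proof
  fix x :: "nat \<Rightarrow> 'a" assume "x \<in> vecs n"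
  then have "x = (\<Sum>i\<in>{..<n}. fscale (x i) (unitv i))"
    by (intro expand_vec) (auto simp: vecs_def)
  also have "\<dots> \<in> fvec.span (unitv ` {..<n})"
    by (intro fvec.span_sum fvec.span_scale fvec.span_base) auto
  finally show "x \<in> fvec.span (unitv ` {..<n})" .
qed

lemma vecs_eq_span: "vecs n = fvec.span (unitv ` {..<n} :: (nat \<Rightarrow> 'a::field) set)"
proof (rule antisym[OF vecs_span])
  show "fvec.span (unitv ` {..<n}) \<subseteq> (vecs n :: (nat \<Rightarrow> 'a::field) set)"
    by (rule fvec.span_minimal[OF _ subspace_vecs]) (auto simp: unitv_in_vecs)
qed

lemma indep_unitv: "fvec.independent (unitv ` {..<n} :: (nat \<Rightarrow> 'a::field) set)"
proof (rule fvec.independent_if_scalars_zero)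
  show "finite (unitv ` {..<n} :: (nat \<Rightarrow> 'a) set)" by auto
  fix f :: "(nat \<Rightarrow> 'a) \<Rightarrow> 'a" and x :: "nat \<Rightarrow> 'a"
  assume s: "(\<Sum>x\<in>unitv ` {..<n}. fscale (f x) x) = 0" and x: "x \<in> unitv ` {..<n}"
  then obtain i where i: "i < n" "x = unitv i" by auto
  have inj: "inj_on (unitv :: nat \<Rightarrow> nat \<Rightarrow> 'a) {..<n}"
    by (auto simp: inj_on_def unitv_def fun_eq_iff split: if_splits)
  have "0 = (\<Sum>x\<in>unitv ` {..<n}. fscale (f x) x) i" using s by simp
  also have "\<dots> = (\<Sum>j<n. f (unitv j) * unitv j i)"
    by (simp add: sum_fun_apply fscale_def sum.reindex[OF inj])
  also have "\<dots> = (\<Sum>j<n. if j = i then f (unitv j) else 0)"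
    by (rule sum.cong) (auto simp: unitv_def)
  also have "\<dots> = f (unitv i)"
    using i by simp
  finally show "f x = 0" using i by simp
qed

lemma dim_vecs: "fvec.dim (vecs n :: (nat \<Rightarrow> 'a::field) set) = n"
proof -
  have inj: "inj_on (unitv :: nat \<Rightarrow> nat \<Rightarrow> 'a) {..<n}"
    by (auto simp: inj_on_def unitv_def fun_eq_iff split: if_splits)
  show ?thesis
    unfolding vecs_eq_span fvec.dim_span_eq_card_independent[OF indep_unitv]
    using card_image[OF inj] by simp
qed

lemma indep_finite_vecs:
  assumes "fvec.independent K" "K \<subseteq> vecs n"
  shows "finite K \<and> card K \<le> (n::nat)"
proof -
  have fin: "finite (unitv ` {..<n} :: (nat \<Rightarrow> 'a::field) set)" by simp
  have sub: "K \<subseteq> fvec.span (unitv ` {..<n})" using assms(2) vecs_span by blast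
  have "finite K \<and> card K \<le> card (unitv ` {..<n} :: (nat \<Rightarrow> 'a::field) set)"
    by (rule fvec.independent_span_bound[OF fin assms(1) sub])
  moreover have "card (unitv ` {..<n} :: (nat \<Rightarrow> 'a::field) set) \<le> n"
    using card_image_le[of "{..<n}" unitv] by simp
  ultimately show ?thesis by linarith
qed


lemma dim_insert_le:
  assumes X: "X \<subseteq> vecs n" and Y: "Y \<subseteq> fvec.span (insert v X)"
  shows "fvec.dim (Y :: (nat \<Rightarrow> 'a::field) set) \<le> fvec.dim X + 1"
proof -
  obtain K where K: "K \<subseteq> X" "fvec.independent K" "X \<subseteq> fvec.span K" "card K = fvec.dim X"
    using fvec.basis_exists by blast
  have fin: "finite K" using indep_finite_vecs[OF K(2)] K(1) X by blast
  have "insert v X \<subseteq> fvec.span (insert v K)"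
    using K(3) fvec.span_mono[of K "insert v K"] fvec.span_superset[of "insert v K"] by auto
  then have "fvec.span (insert v X) \<subseteq> fvec.span (insert v K)"
    using fvec.span_minimal[OF _ fvec.subspace_span] by blast
  then have "fvec.dim Y \<le> card (insert v K)"
    using Y fin by (intro fvec.dim_le_card) auto
  also have "\<dots> \<le> card K + 1" using fin by (simp add: card_insert_if)
  finally show ?thesis using K(4) by simp
qed

lemma orth_lin: "orth n (x - fscale t v) b = orth n x b - t * orth n v b"
  by (simp add: orth_def fscale_def algebra_simps sum_subtractf sum_distrib_left)

lemma hyper:
  assumes V: "fvec.subspace V" "V \<subseteq> vecs n"
  shows "fvec.dim (V :: (nat \<Rightarrow> 'a::field) set) \<le> fvec.dim (V \<inter> {x. orth n x b = 0}) + 1"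
proof (cases "\<forall>v\<in>V. orth n v b = 0")
  case True
  then have "V \<inter> {x. orth n x b = 0} = V" by auto
  then show ?thesis by simp
next
  case False
  then obtain v0 where v0: "v0 \<in> V" "orth n v0 b \<noteq> 0" by auto
  have "V \<subseteq> fvec.span (insert v0 (V \<inter> {x. orth n x b = 0}))"
  proof
    fix x assume x: "x \<in> V"
    define t where "t = orth n x b / orth n v0 b"
    have "x - fscale t v0 \<in> V \<inter> {x. orth n x b = 0}"
      using x v0 V(1) by (auto simp: orth_lin t_def fvec.subspace_diff fvec.subspace_scale)
    then have "(x - fscale t v0) + fscale t v0 \<in> fvec.span (insert v0 (V \<inter> {x. orth n x b = 0}))"
      by (intro fvec.span_add fvec.span_scale fvec.span_base) auto
    then show "x \<in> fvec.span (insert v0 (V \<inter> {x. orth n x b = 0}))" by simp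
  qed
  then show ?thesis using V(2) by (intro dim_insert_le[of _ n]) auto
qed

lemma dual_code_orth: "dual_code n K = {x \<in> vecs n. \<forall>c\<in>K. orth n x c = 0}"
  by (simp add: dual_code_def orth_def)

lemma subspace_dual: "fvec.subspace (dual_code n (K :: (nat \<Rightarrow> 'a::field) set))"
proof -
  have "(\<Sum>i<n. x i * (c * y i)) = c * (\<Sum>i<n. x i * y i)" for c y and x :: "nat \<Rightarrow> 'a"
    by (simp add: sum_distrib_left algebra_simps)
  then show ?thesis unfolding fvec.subspace_def dual_code_def vecs_def
    by (auto simp: fscale_def distrib_right sum.distrib algebra_simps sum_distrib_left[symmetric])
qed

lemma easy_finite:
  assumes "finite K"
  shows "n \<le> fvec.dim (dual_code n (K :: (nat \<Rightarrow> 'a::field) set)) + card K"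
  using assms
proof (induction K rule: finite_induct)
  case empty
  have "dual_code n ({} :: (nat \<Rightarrow> 'a) set) = vecs n" by (simp add: dual_code_def)
  then show ?case by (simp add: dim_vecs)
next
  case (insert b K)
  have eq: "dual_code n (insert b K) = dual_code n K \<inter> {x. orth n x b = 0}"
    by (auto simp: dual_code_orth)
  have "fvec.dim (dual_code n K) \<le> fvec.dim (dual_code n (insert b K)) + 1"
    unfolding eq by (rule hyper[OF subspace_dual]) (auto simp: dual_code_def)
  then show ?case using insert by simp
qed

lemma easy_dual:
  assumes W: "fvec.subspace W" "W \<subseteq> vecs n"
  shows "n \<le> fvec.dim (dual_code n (W :: (nat \<Rightarrow> 'a::field) set)) + fvec.dim W"
proof -
  obtain K where K: "K \<subseteq> W" "fvec.independent K" "W \<subseteq> fvec.span K" "card K = fvec.dim W"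
    using fvec.basis_exists by blast
  have fin: "finite K" using indep_finite_vecs[OF K(2)] K(1) W by blast
  have "dual_code n K \<subseteq> dual_code n W"
  proof
    fix x assume x: "x \<in> dual_code n K"
    have "fvec.span K \<subseteq> {w. orth n x w = 0}"
      using x by (intro fvec.span_minimal[OF _ subspace_orth]) (auto simp: dual_code_orth)
    then show "x \<in> dual_code n W" using x K(3) by (auto simp: dual_code_orth)
  qed
  moreover have "dual_code n W \<subseteq> dual_code n K" using K(1) by (auto simp: dual_code_def)
  ultimately have "dual_code n K = dual_code n W" by blast
  then show ?thesis using easy_finite[OF fin, of n] K(4) by simp
qed


definition stab :: "nat \<Rightarrow> (nat \<Rightarrow> 'a::field) set \<Rightarrow> (nat \<Rightarrow> 'a) set" where
  "stab n C = {x \<in> vecs n. \<forall>c\<in>C. schur x c \<in> C}"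

lemma proj_vecs: "c \<in> vecs n \<Longrightarrow> proj B c \<in> vecs n"
  by (auto simp: vecs_def proj_def)

lemma schur_ind: "schur (ind B) c = proj B c"
  by (auto simp: schur_def ind_def proj_def fun_eq_iff)

lemma ind_vecs: "B \<subseteq> {..<n} \<Longrightarrow> ind B \<in> vecs n"
  by (auto simp: vecs_def ind_def proj_def)

lemma schur_vecs: "x \<in> vecs n \<Longrightarrow> schur x c \<in> vecs n"
  by (auto simp: vecs_def schur_def)

lemma schur_vecs2: "c \<in> vecs n \<Longrightarrow> schur x c \<in> vecs n"
  by (auto simp: vecs_def schur_def)

lemma orth_schur: "orth n (schur x c) c' = orth n x (schur c c')"
  by (simp add: orth_def schur_def mult.assoc)

lemma orth_ind: "B \<subseteq> {..<n} \<Longrightarrow> orth n (ind B) y = (\<Sum>i\<in>B. y i)"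
proof -
  assume B: "B \<subseteq> {..<n}"
  have "orth n (ind B) y = (\<Sum>i<n. if i \<in> B then y i else 0)"
    unfolding orth_def ind_def proj_def by (rule sum.cong) auto
  also have "\<dots> = sum y ({..<n} \<inter> B)" by (simp add: sum.inter_restrict)
  also have "{..<n} \<inter> B = B" using B by auto
  finally show ?thesis .
qed

lemma orth_unitv: "i < n \<Longrightarrow> orth n (unitv i) c = c i"
proof -
  assume i: "i < n"
  have "orth n (unitv i) c = (\<Sum>j<n. if j = i then c j else 0)"
    unfolding orth_def unitv_def by (rule sum.cong) auto
  then show ?thesis using i by simp
qed

lemma proj_diff: "proj B (x - y) = proj B x - proj B (y :: nat \<Rightarrow> 'a::field)"
  by (auto simp: proj_def fun_eq_iff)
lemma proj_add: "proj B (x + y) = proj B x + proj B (y :: nat \<Rightarrow> 'a::field)"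
  by (auto simp: proj_def fun_eq_iff)
lemma proj_zero[simp]: "proj B 0 = (0 :: nat \<Rightarrow> 'a::field)"
  by (auto simp: proj_def fun_eq_iff)
lemma proj_proj: "proj I (proj B x) = proj (I \<inter> B) x"
  by (auto simp: proj_def fun_eq_iff)

lemma part_sum:
  assumes "\<forall>B\<in>P. \<forall>B'\<in>P. B \<noteq> B' \<longrightarrow> B \<inter> B' = {}" "finite P" "B0 \<in> P" "l \<in> B0"
  shows "(\<Sum>B\<in>P. if l \<in> B then f B else (0::'b::comm_monoid_add)) = f B0"
proof -
  have "(\<Sum>B\<in>P. if l \<in> B then f B else (0::'b)) = (\<Sum>B\<in>P. if B = B0 then f B else 0)"
    by (rule sum.cong) (use assms in auto)
  then show ?thesis using assms by simp
qed

lemma part_sum0: "l \<notin> \<Union>P \<Longrightarrow> (\<Sum>B\<in>P. if l \<in> B then f B else (0::'b::comm_monoid_add)) = 0"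
  by (rule sum.neutral) auto

lemma proj_hom: "module_hom fscale fscale (proj T :: (nat \<Rightarrow> 'a::field) \<Rightarrow> _)"
  by (auto simp: module_hom_iff fvec.module_axioms proj_def fscale_def fun_eq_iff)

context
  fixes C :: "(nat \<Rightarrow> 'a::field) set" and n :: nat
  assumes sd: "self_dual n C"
begin

lemma C_vecs: "C \<subseteq> vecs n" and C_sub: "fvec.subspace C" and C_dual: "C = dual_code n C"
  using sd by (auto simp: self_dual_def lin_code_def)

lemma C_mem_iff: "c \<in> C \<longleftrightarrow> c \<in> vecs n \<and> (\<forall>c'\<in>C. orth n c c' = 0)"
proof -
  have "c \<in> C \<longleftrightarrow> c \<in> dual_code n C" by (rule eqset_imp_iff[OF C_dual])
  then show ?thesis by (simp add: dual_code_orth)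
qed

lemma C_zero: "0 \<in> C" using C_sub fvec.subspace_0 by blast

lemma nonzero_coord:
  assumes "i < n" shows "\<exists>c\<in>C. c i \<noteq> 0"
proof (rule ccontr)
  assume nz: "\<not> (\<exists>c\<in>C. c i \<noteq> 0)"
  then have "unitv i \<in> C"
    using assms by (subst C_mem_iff) (auto simp: orth_unitv unitv_in_vecs)
  then show False using nz by (auto simp: unitv_def)
qed

lemma stab_sub: "fvec.subspace (stab n C)"
  unfolding fvec.subspace_def
proof (intro conjI ballI allI)
  show "0 \<in> stab n C"
    using C_zero by (auto simp: stab_def vecs_def schur_def zero_fun_def[symmetric])
next
  fix x y assume x: "x \<in> stab n C" and y: "y \<in> stab n C"
  show "x + y \<in> stab n C"
  proof -
    have "schur (x + y) c = schur x c + schur y c" for c by (auto simp: schur_def fun_eq_iff algebra_simps)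
    then show ?thesis using x y fvec.subspace_add[OF C_sub] fvec.subspace_add[OF subspace_vecs]
      by (auto simp: stab_def)
  qed
next
  fix a x assume x: "x \<in> stab n C"
  have "schur (fscale a x) c = fscale a (schur x c)" for c by (auto simp: schur_def fscale_def fun_eq_iff)
  then show "fscale a x \<in> stab n C"
    using x fvec.subspace_scale[OF C_sub] fvec.subspace_scale[OF subspace_vecs]
    by (auto simp: stab_def)
qed

lemma stab_schur: "x \<in> stab n C \<Longrightarrow> y \<in> stab n C \<Longrightarrow> schur x y \<in> stab n C"
proof -
  assume x: "x \<in> stab n C" and y: "y \<in> stab n C"
  have "schur (schur x y) c = schur x (schur y c)" for c by (auto simp: schur_def fun_eq_iff mult.assoc)
  then show ?thesis using x y by (auto simp: stab_def schur_vecs)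
qed

lemma ind_stab_iff: "B \<subseteq> {..<n} \<Longrightarrow> ind B \<in> stab n C \<longleftrightarrow> (\<forall>c\<in>C. proj B c \<in> C)"
  by (auto simp: stab_def schur_ind ind_vecs)

lemma proj_S: "c \<in> vecs n \<Longrightarrow> proj {..<n} c = c"
  by (auto simp: proj_def vecs_def fun_eq_iff)

lemma indS_stab: "ind {..<n} \<in> stab n C"
  using C_vecs by (subst ind_stab_iff) (auto simp: proj_S)

lemma lagrange:
  assumes x: "x \<in> stab n C" and M: "finite M" "lam \<notin> M"
  shows "(\<lambda>i. if i < n then (\<Prod>mu\<in>M. (x i - mu) / (lam - mu)) else 0) \<in> stab n C"
  using M
proof (induction M rule: finite_induct)
  case empty
  have "(\<lambda>i. if i < n then (\<Prod>mu\<in>{}. (x i - mu) / (lam - mu)) else 0) = ind {..<n}"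
    by (auto simp: ind_def proj_def fun_eq_iff)
  then show ?case using indS_stab by simp
next
  case (insert mu M)
  let ?L = "(\<lambda>i. if i < n then (\<Prod>mu\<in>M. (x i - mu) / (lam - mu)) else 0)"
  have L: "?L \<in> stab n C" using insert by auto
  have f: "fscale (1 / (lam - mu)) (x - fscale mu (ind {..<n})) \<in> stab n C"
    using x indS_stab stab_sub by (intro fvec.subspace_scale fvec.subspace_diff) auto
  have xv: "x \<in> vecs n" using x by (auto simp: stab_def)
  have "schur (fscale (1 / (lam - mu)) (x - fscale mu (ind {..<n}))) ?L =
    (\<lambda>i. if i < n then (\<Prod>mu\<in>insert mu M. (x i - mu) / (lam - mu)) else 0)"
    using insert(1,2) xv by (auto simp: schur_def fscale_def ind_def proj_def fun_eq_iff vecs_def)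
  then show ?case using stab_schur[OF f L] by simp
qed

lemma level_split:
  assumes x: "x \<in> stab n C"
  shows "\<forall>c\<in>C. proj {i\<in>{..<n}. x i = lam} c \<in> C"
proof -
  let ?M = "x ` {..<n} - {lam}"
  have "(\<lambda>i. if i < n then (\<Prod>mu\<in>?M. (x i - mu) / (lam - mu)) else 0) \<in> stab n C"
    using lagrange[OF x] by auto
  moreover have "(\<lambda>i. if i < n then (\<Prod>mu\<in>?M. (x i - mu) / (lam - mu)) else 0) = ind {i\<in>{..<n}. x i = lam}"
  proof
    fix i
    show "(if i < n then (\<Prod>mu\<in>?M. (x i - mu) / (lam - mu)) else 0) = ind {i\<in>{..<n}. x i = lam} i"
    proof (cases "i < n")
      case True
      show ?thesis
      proof (cases "x i = lam")
        case True
        then have "(\<Prod>mu\<in>?M. (x i - mu) / (lam - mu)) = 1"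
          by (intro prod.neutral) auto
        then show ?thesis using True \<open>i < n\<close> by (simp add: ind_def proj_def)
      next
        case False
        then have "(\<Prod>mu\<in>?M. (x i - mu) / (lam - mu)) = 0"
          using \<open>i < n\<close> by (intro prod_zero) auto
        then show ?thesis using False \<open>i < n\<close> by (simp add: ind_def proj_def)
      qed
    qed (simp add: ind_def proj_def)
  qed
  ultimately show ?thesis by (subst ind_stab_iff[symmetric]) auto
qed

lemma W_vecs: "schur_square C \<subseteq> vecs n"
  unfolding schur_square_def
  by (rule fvec.span_minimal[OF _ subspace_vecs]) (use C_vecs schur_vecs2 in blast)

lemma W_sub: "fvec.subspace (schur_square C)"
  unfolding schur_square_def by simp

lemma stab_orth: "x \<in> stab n C \<Longrightarrow> w \<in> schur_square C \<Longrightarrow> orth n x w = 0"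
proof -
  assume x: "x \<in> stab n C" and w: "w \<in> schur_square C"
  have "schur_square C \<subseteq> {w. orth n x w = 0}"
    unfolding schur_square_def
  proof (rule fvec.span_minimal[OF _ subspace_orth], safe)
    fix c c' assume "c \<in> C" "c' \<in> C"
    then have "schur x c \<in> C" using x by (auto simp: stab_def)
    then have "orth n (schur x c) c' = 0" using \<open>c' \<in> C\<close> C_mem_iff by blast
    then show "orth n x (schur c c') = 0" by (simp add: orth_schur)
  qed
  then show ?thesis using w by auto
qed

lemma dual_W_stab: "dual_code n (schur_square C) \<subseteq> stab n C"
proof
  fix x assume x: "x \<in> dual_code n (schur_square C)"
  show "x \<in> stab n C"
    unfolding stab_def
  proof (safe)
    show "x \<in> vecs n" using x by (auto simp: dual_code_def)
    fix c assume c: "c \<in> C"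
    have "\<forall>c'\<in>C. orth n (schur x c) c' = 0"
    proof
      fix c' assume "c' \<in> C"
      then have "schur c c' \<in> schur_square C"
        using c unfolding schur_square_def by (intro fvec.span_base) blast
      then show "orth n (schur x c) c' = 0"
        using x by (auto simp: orth_schur dual_code_orth)
    qed
    then show "schur x c \<in> C" using C_mem_iff schur_vecs \<open>x \<in> vecs n\<close> by blast
  qed
qed


lemma bd_basic:
  assumes bd: "block_decomp {..<n} C P"
  shows "finite P" "\<And>B. B \<in> P \<Longrightarrow> B \<noteq> {}" "\<Union>P = {..<n}"
    "\<forall>B\<in>P. \<forall>B'\<in>P. B \<noteq> B' \<longrightarrow> B \<inter> B' = {}"
    "\<And>B. B \<in> P \<Longrightarrow> B \<subseteq> {..<n}"
    "\<And>B. B \<in> P \<Longrightarrow> indecomposable B (proj B ` C)"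
  using bd unfolding block_decomp_def by blast+

lemma bd_split:
  assumes bd: "block_decomp {..<n} C P" and B: "B \<in> P" and c: "c \<in> C"
  shows "proj B c \<in> C"
proof -
  have eqC: "C = {(\<Sum>B\<in>P. proj B (x B)) | x. \<forall>B\<in>P. x B \<in> C}"
    using bd unfolding block_decomp_def by blast
  let ?x = "\<lambda>B'. if B' = B then c else 0"
  have "(\<Sum>B'\<in>P. proj B' (?x B')) = (\<Sum>B'\<in>P. if B' = B then proj B c else 0)"
    by (rule sum.cong) auto
  also have "\<dots> = proj B c" using B bd_basic(1)[OF bd] by simp
  finally have h1: "proj B c = (\<Sum>B'\<in>P. proj B' (?x B'))" by simp
  have h2: "\<forall>B'\<in>P. ?x B' \<in> C" using c C_zero by auto
  have "\<exists>x. proj B c = (\<Sum>B\<in>P. proj B (x B)) \<and> (\<forall>B\<in>P. x B \<in> C)"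
    by (rule exI[of _ ?x]) (use h1 h2 in simp)
  then have "proj B c \<in> {(\<Sum>B\<in>P. proj B (x B)) | x. \<forall>B\<in>P. x B \<in> C}" by simp
  then show ?thesis using eqC by blast
qed

lemma bd_const:
  assumes bd: "block_decomp {..<n} C P" and x: "x \<in> stab n C" and B: "B \<in> P"
    and i: "i \<in> B" and j: "j \<in> B"
  shows "x i = x j"
proof (rule ccontr)
  assume ne: "x i \<noteq> x j"
  define I' where "I' = {l\<in>{..<n}. x l = x i}"
  define I where "I = B \<inter> I'"
  have BS: "B \<subseteq> {..<n}" using bd_basic(5)[OF bd B] .
  have spl: "\<forall>c\<in>C. proj I' c \<in> C" unfolding I'_def by (rule level_split[OF x])
  have iI: "i \<in> I" using i BS by (auto simp: I_def I'_def)
  have jI: "j \<in> B - I" using j ne by (auto simp: I_def I'_def)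
  have "decomposable B (proj B ` C)"
    unfolding decomposable_def
  proof (intro exI conjI)
    show "I \<subseteq> B" by (auto simp: I_def)
    have "i < n" using i BS by auto
    then obtain c where c: "c \<in> C" "c i \<noteq> 0" using nonzero_coord by blast
    have "proj I (proj B c) \<noteq> 0" using c iI i by (auto simp: proj_def fun_eq_iff)
    then show "proj I ` proj B ` C \<noteq> {0}" using c(1) by blast
    have "j < n" using j BS by auto
    then obtain c' where c': "c' \<in> C" "c' j \<noteq> 0" using nonzero_coord by blast
    have "proj (B - I) (proj B c') \<noteq> 0" using c' jI j by (auto simp: proj_def fun_eq_iff)
    then show "proj (B - I) ` proj B ` C \<noteq> {0}" using c'(1) by blast
    show "proj B ` C = {proj I y + proj (B - I) z |y z. y \<in> proj B ` C \<and> z \<in> proj B ` C}"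
    proof (rule set_eqI, rule iffI)
      fix w assume w: "w \<in> proj B ` C"
      then obtain c0 where "w = proj B c0" by blast
      then have "w = proj I w + proj (B - I) w"
        by (auto simp: proj_def fun_eq_iff I_def)
      then show "w \<in> {proj I y + proj (B - I) z |y z. y \<in> proj B ` C \<and> z \<in> proj B ` C}"
        using w by blast
    next
      fix w assume "w \<in> {proj I y + proj (B - I) z |y z. y \<in> proj B ` C \<and> z \<in> proj B ` C}"
      then obtain c1 c2 where cc: "c1 \<in> C" "c2 \<in> C" "w = proj I (proj B c1) + proj (B - I) (proj B c2)"
        by blast
      have "w = proj B (proj I' c1 + (c2 - proj I' c2))"
        using cc(3) by (auto simp: proj_def fun_eq_iff I_def)
      moreover have "proj I' c1 + (c2 - proj I' c2) \<in> C"
        using cc spl C_sub by (intro fvec.subspace_add fvec.subspace_diff) auto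
      ultimately show "w \<in> proj B ` C" by blast
    qed
  qed
  then show False using bd_basic(6)[OF bd B] by (simp add: indecomposable_def)
qed

lemma stab_span:
  assumes bd: "block_decomp {..<n} C P"
  shows "stab n C \<subseteq> fvec.span (ind ` P)"
proof
  fix x assume x: "x \<in> stab n C"
  define r where "r = (\<lambda>B::nat set. SOME i. i \<in> B)"
  have rB: "r B \<in> B" if "B \<in> P" for B
    using bd_basic(2)[OF bd that] unfolding r_def by (auto intro: someI_ex)
  have "x = (\<Sum>B\<in>P. fscale (x (r B)) (ind B))"
  proof
    fix l
    have "(\<Sum>B\<in>P. fscale (x (r B)) (ind B)) l = (\<Sum>B\<in>P. x (r B) * (if l \<in> B then 1 else 0))"
      by (simp add: sum_fun_apply fscale_def ind_def proj_def)
    also have "\<dots> = (\<Sum>B\<in>P. if l \<in> B then x (r B) else 0)"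
      by (rule sum.cong) auto
    also have "\<dots> = x l"
    proof (cases "l < n")
      case True
      then obtain B0 where B0: "B0 \<in> P" "l \<in> B0" using bd_basic(3)[OF bd] by auto
      have "(\<Sum>B\<in>P. if l \<in> B then x (r B) else 0) = x (r B0)"
        by (rule part_sum[OF bd_basic(4)[OF bd] bd_basic(1)[OF bd] B0])
      also have "\<dots> = x l" using bd_const[OF bd x B0(1) rB[OF B0(1)] B0(2)] .
      finally show ?thesis .
    next
      case False
      then have "l \<notin> \<Union>P" using bd_basic(3)[OF bd] by auto
      then show ?thesis using False x part_sum0 by (auto simp: stab_def vecs_def)
    qed
    finally show "x l = (\<Sum>B\<in>P. fscale (x (r B)) (ind B)) l" by simp
  qed
  also have "\<dots> \<in> fvec.span (ind ` P)"
    by (intro fvec.span_sum fvec.span_scale fvec.span_base) auto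
  finally show "x \<in> fvec.span (ind ` P)" .
qed

lemma W_blocks:
  assumes bd: "block_decomp {..<n} C P" and B: "B \<in> P" and y: "y \<in> schur_square C"
  shows "(\<Sum>i\<in>B. y i) = 0"
proof -
  have "ind B \<in> stab n C"
    using bd_basic(5)[OF bd B] bd_split[OF bd B] by (subst ind_stab_iff) auto
  then have "orth n (ind B) y = 0" using stab_orth y by blast
  moreover have "orth n (ind B) y = (\<Sum>i\<in>B. y i)" by (rule orth_ind[OF bd_basic(5)[OF bd B]])
  ultimately show ?thesis by simp
qed

end


definition good :: "nat \<Rightarrow> (nat \<Rightarrow> 'a::field) set \<Rightarrow> nat set set \<Rightarrow> bool" where
  "good n C P \<longleftrightarrow> finite P \<and> (\<forall>B\<in>P. B \<noteq> {}) \<and> \<Union>P = {..<n} \<and>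
     (\<forall>B\<in>P. \<forall>B'\<in>P. B \<noteq> B' \<longrightarrow> B \<inter> B' = {}) \<and> (\<forall>B\<in>P. \<forall>c\<in>C. proj B c \<in> C)"

lemma disj_card_le:
  assumes "\<forall>B\<in>P. B \<noteq> {}" "\<Union>P \<subseteq> S" "finite S"
    "\<forall>B\<in>P. \<forall>B'\<in>P. B \<noteq> B' \<longrightarrow> B \<inter> B' = {}"
  shows "card P \<le> card (S::nat set)"
proof -
  define r where "r = (\<lambda>B::nat set. SOME i. i \<in> B)"
  have rB: "r B \<in> B" if rBp: "B \<in> P" for B
  proof -
    have "\<exists>i. i \<in> B" using assms(1) rBp by blast
    then show ?thesis unfolding r_def by (rule someI_ex)
  qed
  have injr: "inj_on r P"
  proof (rule inj_onI)
    fix B B' assume BB: "B \<in> P" "B' \<in> P" "r B = r B'"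
    show "B = B'"
    proof (rule ccontr)
      assume "B \<noteq> B'"
      then have "B \<inter> B' = {}" using assms(4) BB by blast
      moreover have "r B \<in> B \<inter> B'" using rB[OF BB(1)] rB[OF BB(2)] BB(3) by simp
      ultimately show False by simp
    qed
  qed
  have "r ` P \<subseteq> S" using rB assms(2) by force
  then have "card (r ` P) \<le> card S" using assms(3) by (simp add: card_mono)
  then show ?thesis using card_image[OF injr] by simp
qed

context
  fixes C :: "(nat \<Rightarrow> 'a::field) set" and n :: nat
  assumes sd: "self_dual n C"
begin

lemma bd_dim:
  assumes bd: "block_decomp {..<n} C P"
  shows "fvec.dim (schur_square C) + card P = n"
proof -
  let ?W = "schur_square C"
  define r where "r = (\<lambda>B::nat set. SOME i. i \<in> B)"
  have rB: "r B \<in> B" if "B \<in> P" for B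
    using bd_basic(2)[OF sd bd that] unfolding r_def by (auto intro: someI_ex)
  have disj: "\<forall>B\<in>P. \<forall>B'\<in>P. B \<noteq> B' \<longrightarrow> B \<inter> B' = {}" by (rule bd_basic(4)[OF sd bd])
  have finP: "finite P" by (rule bd_basic(1)[OF sd bd])
  have BS: "B \<subseteq> {..<n}" if "B \<in> P" for B using bd_basic(5)[OF sd bd that] .
  define R where "R = r ` P"
  have injr: "inj_on r P"
  proof (rule inj_onI)
    fix B B' assume BB: "B \<in> P" "B' \<in> P" "r B = r B'"
    show "B = B'"
    proof (rule ccontr)
      assume "B \<noteq> B'"
      then have "B \<inter> B' = {}" using disj BB by blast
      moreover have "r B \<in> B \<inter> B'" using rB[OF BB(1)] rB[OF BB(2)] BB(3) by simp
      ultimately show False by simp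
    qed
  qed
  have cardR: "card R = card P" unfolding R_def by (rule card_image[OF injr])
  have RS: "R \<subseteq> {..<n}" unfolding R_def using rB BS by force
  have RB: "i = r B" if RBp: "B \<in> P" "i \<in> B" "i \<in> R" for B i
  proof -
    obtain B' where B': "B' \<in> P" "i = r B'" using RBp(3) unfolding R_def by blast
    have "B' = B"
    proof (rule ccontr)
      assume "B' \<noteq> B"
      then have "B' \<inter> B = {}" using disj B'(1) RBp(1) by blast
      moreover have "i \<in> B' \<inter> B" using rB[OF B'(1)] B'(2) RBp(2) by simp
      ultimately show False by simp
    qed
    then show ?thesis using B' by simp
  qed
  define T where "T = {..<n} - R"
  have finT: "finite T" unfolding T_def by simp
  have cardT: "card T = n - card P"
    unfolding T_def using RS cardR by (simp add: card_Diff_subset finite_subset)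
  have Wv: "?W \<subseteq> vecs n" by (rule W_vecs[OF sd])
  have key: "z = 0" if z: "z \<in> ?W" "proj T z = 0" for z
  proof
    fix l
    have zT: "z i = 0" if "i \<in> T" for i
      using fun_cong[OF z(2), of i] that by (simp add: proj_def)
    have zr: "z (r B) = 0" if B: "B \<in> P" for B
    proof -
      have "(\<Sum>i\<in>B. z i) = 0" by (rule W_blocks[OF sd bd B z(1)])
      moreover have "(\<Sum>i\<in>B. z i) = (\<Sum>i\<in>B. if i = r B then z i else 0)"
      proof (rule sum.cong)
        fix i assume i: "i \<in> B"
        show "z i = (if i = r B then z i else 0)"
        proof (cases "i = r B")
          case False
          then have "i \<notin> R" using RB[OF B i] by blast
          then have "i \<in> T" using i BS[OF B] unfolding T_def by auto
          then show ?thesis using zT False by simp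
        qed simp
      qed simp
      moreover have "finite B" using finite_subset[OF BS[OF B]] by simp
      ultimately show ?thesis using rB[OF B] by simp
    qed
    show "z l = 0 l"
    proof (cases "l < n")
      case True
      show ?thesis
      proof (cases "l \<in> R")
        case True
        then obtain B where "B \<in> P" "l = r B" unfolding R_def by blast
        then show ?thesis using zr by simp
      next
        case False
        then show ?thesis using zT \<open>l < n\<close> unfolding T_def by simp
      qed
    next
      case False
      then show ?thesis using z(1) Wv by (auto simp: vecs_def)
    qed
  qed
  have injW: "inj_on (proj T) ?W"
  proof (rule inj_onI)
    fix x y assume xy: "x \<in> ?W" "y \<in> ?W" "proj T x = proj T y"
    have "x - y \<in> ?W" using fvec.subspace_diff[OF W_sub[OF sd] xy(1) xy(2)] .
    moreover have "proj T (x - y) = 0" using xy(3) by (simp add: proj_diff)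
    ultimately have "x - y = 0" using key by blast
    then show "x = y" by simp
  qed
  obtain K where K: "K \<subseteq> ?W" "fvec.independent K" "?W \<subseteq> fvec.span K" "card K = fvec.dim ?W"
    using fvec.basis_exists by blast
  have finK: "finite K" using indep_finite_vecs[OF K(2)] K(1) Wv by (meson order_trans)
  have spanK: "fvec.span K \<subseteq> ?W" by (rule fvec.span_minimal[OF K(1) W_sub[OF sd]])
  have indep: "fvec.independent (proj T ` K)"
    using module_hom.independent_injective_image[OF proj_hom K(2)]
      inj_on_subset[OF injW spanK] by blast
  have sub: "proj T ` K \<subseteq> fvec.span (unitv ` T)"
  proof
    fix v assume "v \<in> proj T ` K"
    then obtain k where v: "v = proj T k" by blast
    have "v = (\<Sum>i\<in>T. fscale (v i) (unitv i))"
      by (rule expand_vec[OF finT]) (simp add: v proj_def)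
    also have "\<dots> \<in> fvec.span (unitv ` T)"
      by (intro fvec.span_sum fvec.span_scale fvec.span_base) auto
    finally show "v \<in> fvec.span (unitv ` T)" .
  qed
  have "card (proj T ` K) \<le> card (unitv ` T :: (nat \<Rightarrow> 'a) set)"
    using fvec.independent_span_bound[OF _ indep sub] finT by simp
  also have "\<dots> \<le> card T" by (rule card_image_le[OF finT])
  finally have c1: "card (proj T ` K) \<le> card T" .
  have "card (proj T ` K) = card K"
    by (rule card_image[OF inj_on_subset[OF injW K(1)]])
  then have hard: "fvec.dim ?W \<le> n - card P" using c1 cardT K(4) by simp
  have easy1: "n \<le> fvec.dim (dual_code n ?W) + fvec.dim ?W"
    by (rule easy_dual[OF W_sub[OF sd] Wv])
  have "dual_code n ?W \<subseteq> fvec.span (ind ` P)"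
    using dual_W_stab[OF sd] stab_span[OF sd bd] by blast
  then have "fvec.dim (dual_code n ?W) \<le> card (ind ` P :: (nat \<Rightarrow> 'a) set)"
    using finP by (intro fvec.dim_le_card) auto
  also have "\<dots> \<le> card P" by (rule card_image_le[OF finP])
  finally have "fvec.dim (dual_code n ?W) \<le> card P" .
  moreover have "card P \<le> n" using cardR RS card_mono[of "{..<n}" R] by simp
  ultimately show ?thesis using hard easy1 by linarith
qed


lemma good_bd:
  assumes g: "good n C P" and ind: "\<forall>B\<in>P. indecomposable B (proj B ` C)"
  shows "block_decomp {..<n} C P"
proof -
  have disj: "\<forall>B\<in>P. \<forall>B'\<in>P. B \<noteq> B' \<longrightarrow> B \<inter> B' = {}" and finP: "finite P"
    and UP: "\<Union>P = {..<n}" and spl: "\<forall>B\<in>P. \<forall>c\<in>C. proj B c \<in> C"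
    using g by (auto simp: good_def)
  have ne: "\<forall>B\<in>P. B \<noteq> {}" using g by (simp add: good_def)
  have Ceq: "C = {(\<Sum>B\<in>P. proj B (x B)) | x. \<forall>B\<in>P. x B \<in> C}"
  proof (rule set_eqI, rule iffI)
    fix c assume c: "c \<in> C"
    have "c = (\<Sum>B\<in>P. proj B c)"
    proof
      fix l
      have "(\<Sum>B\<in>P. proj B c) l = (\<Sum>B\<in>P. if l \<in> B then c l else 0)"
        by (simp add: sum_fun_apply proj_def)
      also have "\<dots> = c l"
      proof (cases "l < n")
        case True
        then obtain B0 where B0: "B0 \<in> P" "l \<in> B0" using UP by auto
        show ?thesis by (rule part_sum[OF disj finP B0])
      next
        case False
        then have "l \<notin> \<Union>P" using UP by auto
        then show ?thesis using False c C_vecs[OF sd] part_sum0 by (auto simp: vecs_def)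
      qed
      finally show "c l = (\<Sum>B\<in>P. proj B c) l" by simp
    qed
    then have "\<exists>x. c = (\<Sum>B\<in>P. proj B (x B)) \<and> (\<forall>B\<in>P. x B \<in> C)"
      by (intro exI[of _ "\<lambda>_. c"]) (use c in simp)
    then show "c \<in> {(\<Sum>B\<in>P. proj B (x B)) | x. \<forall>B\<in>P. x B \<in> C}" by simp
  next
    fix c assume "c \<in> {(\<Sum>B\<in>P. proj B (x B)) | x. \<forall>B\<in>P. x B \<in> C}"
    then obtain x where x: "c = (\<Sum>B\<in>P. proj B (x B))" "\<forall>B\<in>P. x B \<in> C" by blast
    show "c \<in> C" unfolding x(1)
      by (rule fvec.subspace_sum[OF C_sub[OF sd]]) (use x(2) spl in blast)
  qed
  show ?thesis unfolding block_decomp_def by (intro conjI finP ne disj UP Ceq ind)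
qed

lemma refine:
  assumes g: "good n C P" and B: "B \<in> P" and dec: "decomposable B (proj B ` C)"
  shows "\<exists>P'. good n C P' \<and> card P' = card P + 1"
proof -
  have disj: "\<forall>B\<in>P. \<forall>B'\<in>P. B \<noteq> B' \<longrightarrow> B \<inter> B' = {}" and finP: "finite P"
    and UP: "\<Union>P = {..<n}" and spl: "\<forall>B\<in>P. \<forall>c\<in>C. proj B c \<in> C"
    and ne: "\<forall>B\<in>P. B \<noteq> {}"
    using g by (auto simp: good_def)
  obtain I where I: "I \<subseteq> B" "proj I ` proj B ` C \<noteq> {0}" "proj (B - I) ` proj B ` C \<noteq> {0}"
    and eq: "proj B ` C = {proj I y + proj (B - I) z | y z. y \<in> proj B ` C \<and> z \<in> proj B ` C}"
    using dec unfolding decomposable_def by (elim exE conjE) (rule that; assumption)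
  have pe: "proj {} x = 0" for x :: "nat \<Rightarrow> 'a" by (simp add: proj_def fun_eq_iff)
  have pe0: "proj {} ` proj B ` C = {0}"
  proof
    show "proj {} ` proj B ` C \<subseteq> {0}" by (auto simp: pe)
    have "proj {} (proj B 0) \<in> proj {} ` proj B ` C" using C_zero[OF sd] by blast
    then show "{0} \<subseteq> proj {} ` proj B ` C" by (simp add: pe)
  qed
  have Ine: "I \<noteq> {}" using I(2) pe0 by auto
  have BIne: "B - I \<noteq> {}"
  proof
    assume e: "B - I = {}"
    have "proj (B - I) ` proj B ` C = {0}" unfolding e by (rule pe0)
    then show False using I(3) by simp
  qed
  have splI: "proj I c \<in> C" if c: "c \<in> C" for c
  proof -
    have h1: "proj I c = proj I (proj B c) + proj (B - I) (proj B 0)"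
      using I(1) by (auto simp: proj_def fun_eq_iff)
    have h2: "proj B c \<in> proj B ` C" by (rule imageI[OF c])
    have h3: "proj B 0 \<in> proj B ` C" by (rule imageI[OF C_zero[OF sd]])
    have "\<exists>y z. proj I c = proj I y + proj (B - I) z \<and> y \<in> proj B ` C \<and> z \<in> proj B ` C"
      by (intro exI[of _ "proj B c"] exI[of _ "proj B 0"] conjI h1 h2 h3)
    then have mem: "proj I c \<in> {proj I y + proj (B - I) z | y z. y \<in> proj B ` C \<and> z \<in> proj B ` C}"
      by (simp only: mem_Collect_eq)
    have "proj I c \<in> proj B ` C" using mem unfolding eq[symmetric] .
    then obtain c2 where c2: "c2 \<in> C" "proj I c = proj B c2" by blast
    then show ?thesis using spl B by simp
  qed
  have splBI: "proj (B - I) c \<in> C" if c: "c \<in> C" for c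
  proof -
    have "proj (B - I) c = proj B c - proj I c"
      using I(1) by (auto simp: proj_def fun_eq_iff)
    moreover have "proj B c - proj I c \<in> C"
      by (rule fvec.subspace_diff[OF C_sub[OF sd]]) (use spl B c splI[OF c] in auto)
    ultimately show ?thesis by simp
  qed
  define P' where "P' = insert I (insert (B - I) (P - {B}))"
  have I_notin: "I \<notin> P - {B}"
  proof
    assume a: "I \<in> P - {B}"
    then have "I \<inter> B = {}" using disj[rule_format, of I B] B by auto
    then show False using I(1) Ine by auto
  qed
  have BI_notin: "B - I \<notin> P - {B}"
  proof
    assume a: "B - I \<in> P - {B}"
    then have "(B - I) \<inter> B = {}" using disj[rule_format, of "B - I" B] B by auto
    then show False using BIne by auto
  qed
  have I_ne_BI: "I \<noteq> B - I" using Ine by blast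
  have "card P' = card P + 1"
  proof -
    have "card P' = card (P - {B}) + 2"
      unfolding P'_def using finP I_notin BI_notin I_ne_BI by simp
    moreover have "card (P - {B}) + 1 = card P"
      using finP B card_Diff1_less[of P B] by (simp add: card_Suc_Diff1)
    ultimately show ?thesis by simp
  qed
  moreover have "good n C P'"
    unfolding good_def
  proof (intro conjI)
    show "finite P'" unfolding P'_def using finP by simp
    show "\<forall>B\<in>P'. B \<noteq> {}" unfolding P'_def using ne Ine BIne by auto
    have "\<Union>P' = B \<union> \<Union>(P - {B})" unfolding P'_def using I(1) by auto
    also have "\<dots> = \<Union>P" using B by auto
    finally show "\<Union>P' = {..<n}" using UP by simp
    show "\<forall>B\<in>P'. \<forall>c\<in>C. proj B c \<in> C" unfolding P'_def using spl splI splBI by auto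
    show "\<forall>B1\<in>P'. \<forall>B2\<in>P'. B1 \<noteq> B2 \<longrightarrow> B1 \<inter> B2 = {}"
    proof (intro ballI impI)
      fix B1 B2 assume B12: "B1 \<in> P'" "B2 \<in> P'" "B1 \<noteq> B2"
      show "B1 \<inter> B2 = {}"
      proof (cases "B1 \<in> P - {B}")
        case T1: True
        show ?thesis
        proof (cases "B2 \<in> P - {B}")
          case True
          then show ?thesis using T1 disj[rule_format, of B1 B2] B12(3) by auto
        next
          case False
          then have "B2 \<subseteq> B" using B12(2) I(1) unfolding P'_def by auto
          moreover have "B1 \<inter> B = {}" using T1 disj[rule_format, of B1 B] B by auto
          ultimately show ?thesis by auto
        qed
      next
        case False
        then have b1: "B1 = I \<or> B1 = B - I" using B12(1) unfolding P'_def by auto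
        show ?thesis
        proof (cases "B2 \<in> P - {B}")
          case True
          then have "B2 \<inter> B = {}" using disj[rule_format, of B2 B] B by auto
          moreover have "B1 \<subseteq> B" using b1 I(1) by auto
          ultimately show ?thesis by auto
        next
          case False
          then have "B2 = I \<or> B2 = B - I" using B12(2) unfolding P'_def by auto
          then show ?thesis using b1 B12(3) by auto
        qed
      qed
    qed
  qed
  ultimately show ?thesis by blast
qed

lemma good_card: "good n C P \<Longrightarrow> card P \<le> n"
  using disj_card_le[of P "{..<n}"] by (auto simp: good_def)

lemma bd_exists:
  assumes n: "n > 0"
  shows "\<exists>P. block_decomp {..<n} C P"
proof -
  have g1: "good n C {{..<n}}"
    using n C_vecs[OF sd] by (auto simp: good_def proj_S[OF sd] subsetD)
  have "\<exists>m. (\<exists>P. good n C P \<and> card P = m) \<and> (\<forall>y. (\<exists>P. good n C P \<and> card P = y) \<longrightarrow> y \<le> m)"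
    by (rule Nat.ex_has_greatest_nat[of _ 1 n]) (use g1 good_card in auto)
  then obtain P where P: "good n C P" and mx: "\<And>P'. good n C P' \<Longrightarrow> card P' \<le> card P"
    by blast
  have "\<forall>B\<in>P. indecomposable B (proj B ` C)"
  proof
    fix B assume B: "B \<in> P"
    have "\<not> decomposable B (proj B ` C)"
    proof
      assume "decomposable B (proj B ` C)"
      then obtain P' where "good n C P'" "card P' = card P + 1" using refine[OF P B] by blast
      then show False using mx by fastforce
    qed
    moreover have "B \<noteq> {}" using P B by (auto simp: good_def)
    ultimately show "indecomposable B (proj B ` C)" by (simp add: indecomposable_def)
  qed
  then show ?thesis using good_bd[OF P] by blast
qed

lemma main_aux:
  assumes n: "n > 0"
  shows "fvec.dim (schur_square C) = n - nb n C"
proof -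
  obtain P where P: "block_decomp {..<n} C P" using bd_exists[OF n] by blast
  have "nb n C = card P"
    unfolding nb_def
  proof (rule the_equality)
    show "\<exists>P'. block_decomp {..<n} C P' \<and> card P' = card P" using P by blast
    fix m assume "\<exists>P'. block_decomp {..<n} C P' \<and> card P' = m"
    then obtain P' where "block_decomp {..<n} C P'" "card P' = m" by blast
    then show "m = card P" using bd_dim[OF P] bd_dim[of P'] by simp
  qed
  then show ?thesis using bd_dim[OF P] by simp
qed
end

theorem mainTheorem1:
  fixes C :: "(nat \<Rightarrow> 'a::field) set" and k :: nat
  assumes "k \<ge> 1" and "self_dual (2 * k) C"
  shows "fvec.dim (schur_square C) = 2 * k - nb (2 * k) C"
  using main_aux[OF assms(2)] assms(1) by simp

end
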